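(* Let $G=(V,E,w)$ be a weighted digraph and $W=\sum_{e\in E}w(e)$. Then $\chi_w(G)\le 2\lfloor\sqrt{2W}\rfloor+1$.
   Context: A weighted digraph is $G=(V,E,w)$ with $w:E\to[0,1]$. A $k$-coloring is a map $c:V\to\{1,\dots,k\}$, and $c[v]$ denotes the set of vertices with color $c(v)$. For $S\subseteq V$, $d^-_S(v)=\sum_{u\in S,(u,v)\in E}w(u,v)$. A weighted improper $k$-coloring is a $k$-coloring with $d^-_{c[v]}(v)<1$ for every $v$; $\chi_w(G)$ is the minimum $k$ for which one exists. *)

theory Defs
  imports Complex_Main
begin

definition weighted_digraph :: "'a set \<Rightarrow> ('a \<times> 'a) set \<Rightarrow> ('a \<times> 'a \<Rightarrow> real) \<Rightarrow> bool" where
  "weighted_digraph V E w \<longleftrightarrow> finite V \<and> E \<subseteq> V \<times> V \<and> (\<forall>(u,v)\<in>E. u \<noteq> v)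
     \<and> (\<forall>e\<in>E. 0 \<le> w e \<and> w e \<le> 1)"

definition in_deg :: "('a \<times> 'a) set \<Rightarrow> ('a \<times> 'a \<Rightarrow> real) \<Rightarrow> 'a set \<Rightarrow> 'a \<Rightarrow> real" where
  "in_deg E w S v = (\<Sum>u\<in>{u\<in>S. (u,v)\<in>E}. w (u,v))"

definition color_class :: "'a set \<Rightarrow> ('a \<Rightarrow> nat) \<Rightarrow> 'a \<Rightarrow> 'a set" where
  "color_class V c v = {u\<in>V. c u = c v}"

definition weighted_improper_coloring ::
  "'a set \<Rightarrow> ('a \<times> 'a) set \<Rightarrow> ('a \<times> 'a \<Rightarrow> real) \<Rightarrow> nat \<Rightarrow> ('a \<Rightarrow> nat) \<Rightarrow> bool" where
  "weighted_improper_coloring V E w k c \<longleftrightarrow>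
     (\<forall>v\<in>V. c v \<in> {1..k}) \<and> (\<forall>v\<in>V. in_deg E w (color_class V c v) v < 1)"

definition chi_w :: "'a set \<Rightarrow> ('a \<times> 'a) set \<Rightarrow> ('a \<times> 'a \<Rightarrow> real) \<Rightarrow> nat" where
  "chi_w V E w = (LEAST k. \<exists>c. weighted_improper_coloring V E w k c)"

end

theory Submission
  imports Defs "HOL-Library.FuncSet"
begin

definition deg :: "('a \<times> 'a) set \<Rightarrow> ('a \<times> 'a \<Rightarrow> real) \<Rightarrow> 'a \<Rightarrow> real" where
  "deg E w v = (\<Sum>e\<in>{e\<in>E. fst e = v \<or> snd e = v}. w e)"

lemma potential:
  fixes V' :: "'a set" and E :: "('a \<times> 'a) set" and w :: "'a \<times> 'a \<Rightarrow> real" and m :: nat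
  assumes fV: "finite V'" and loops: "\<forall>(u,v)\<in>E. u\<noteq>v" and wpos: "\<forall>e\<in>E. 0 \<le> w e"
    and fE: "finite E" and m1: "m \<ge> 1" and dm: "\<forall>v\<in>V'. deg E w v < m"
  shows "\<exists>c. (\<forall>v\<in>V'. c v \<in> {1..m}) \<and> (\<forall>v\<in>V'. in_deg E w (color_class V' c v) v < 1)"
proof -
  define E' where "E' = {e\<in>E. fst e \<in> V' \<and> snd e \<in> V'}"
  have fE': "finite E'" using fE unfolding E'_def by simp
  define P where "P d = (\<Sum>e\<in>E'. if d (fst e) = d (snd e) then w e else 0)" for d :: "'a \<Rightarrow> nat"
  define C where "C = (V' \<rightarrow>\<^sub>E {1..m})"
  have fC: "finite C" unfolding C_def using fV by (simp add: finite_PiE)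
  have neC: "C \<noteq> {}" unfolding C_def using m1 by (auto simp: PiE_eq_empty_iff)
  define c where "c = arg_min_on P C"
  have cC: "c \<in> C" and cmin: "\<And>d. d \<in> C \<Longrightarrow> P c \<le> P d"
    using arg_min_if_finite[OF fC neC, of P] unfolding c_def by (auto simp: not_less)
  have crange: "\<forall>v\<in>V'. c v \<in> {1..m}" using cC unfolding C_def by auto
  have "\<forall>v\<in>V'. in_deg E w (color_class V' c v) v < 1"
  proof (intro ballI, rule ccontr)
    fix v assume vV: "v \<in> V'" and bad: "\<not> in_deg E w (color_class V' c v) v < 1"
    define oth where "oth e = (if fst e = v then snd e else fst e)" for e :: "'a \<times> 'a"
    define g where "g x e = (if (fst e = v \<or> snd e = v) \<and> c (oth e) = x then w e else 0)" for x e
    define B where "B x = (\<Sum>e\<in>E'. g x e)" for x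
    have step: "P (c(v := j)) - P c = B j - B (c v)" for j
    proof -
      have "P (c(v := j)) - P c = (\<Sum>e\<in>E'. (if (c(v:=j)) (fst e) = (c(v:=j)) (snd e) then w e else 0)
             - (if c (fst e) = c (snd e) then w e else 0))"
        unfolding P_def by (simp add: sum_subtractf)
      also have "\<dots> = (\<Sum>e\<in>E'. g j e - g (c v) e)"
      proof (rule sum.cong[OF refl])
        fix e assume "e \<in> E'"
        then have "fst e \<noteq> snd e" using loops unfolding E'_def by auto
        then show "(if (c(v:=j)) (fst e) = (c(v:=j)) (snd e) then w e else 0)
             - (if c (fst e) = c (snd e) then w e else 0) = g j e - g (c v) e"
          unfolding g_def oth_def by auto
      qed
      also have "\<dots> = B j - B (c v)" unfolding B_def by (simp add: sum_subtractf)
      finally show ?thesis .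
    qed
    have Ble: "B (c v) \<le> B j" if "j \<in> {1..m}" for j
    proof -
      have "c(v := j) \<in> C" using cC that vV unfolding C_def by (auto simp: PiE_iff extensional_def)
      then have "P c \<le> P (c(v:=j))" by (rule cmin)
      then show ?thesis using step[of j] by simp
    qed
    have gpos: "0 \<le> g x e" if "e \<in> E'" for x e using that wpos unfolding g_def E'_def by auto
    have lower: "1 \<le> B (c v)"
    proof -
      define S where "S = {u\<in>color_class V' c v. (u,v)\<in>E}"
      have "in_deg E w (color_class V' c v) v = (\<Sum>u\<in>S. w (u,v))" unfolding in_deg_def S_def by simp
      also have "\<dots> = (\<Sum>e\<in>(\<lambda>u. (u,v)) ` S. w e)"
        by (simp add: sum.reindex inj_on_def)
      also have "\<dots> = (\<Sum>e\<in>(\<lambda>u. (u,v)) ` S. g (c v) e)"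
      proof (rule sum.cong[OF refl])
        fix e assume "e \<in> (\<lambda>u. (u,v)) ` S"
        then obtain u where u: "u \<in> S" "e = (u,v)" by auto
        then have "u \<noteq> v" using loops S_def by auto
        then show "w e = g (c v) e" using u unfolding g_def oth_def S_def color_class_def by auto
      qed
      also have "\<dots> \<le> B (c v)" unfolding B_def
        by (rule sum_mono2[OF fE']) (use gpos vV in \<open>auto simp: S_def E'_def color_class_def\<close>)
      finally show ?thesis using bad by simp
    qed
    have "real m * B (c v) = (\<Sum>j\<in>{1..m}. B (c v))" by simp
    also have "\<dots> \<le> (\<Sum>j\<in>{1..m}. B j)" by (rule sum_mono) (use Ble in auto)
    also have "\<dots> = (\<Sum>e\<in>E'. \<Sum>j\<in>{1..m}. g j e)" unfolding B_def by (rule sum.swap)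
    also have "\<dots> = (\<Sum>e\<in>E'. if fst e = v \<or> snd e = v then w e else 0)"
    proof (rule sum.cong[OF refl])
      fix e assume eE: "e \<in> E'"
      have oV: "oth e \<in> V'" using eE unfolding E'_def oth_def by auto
      then have cr: "c (oth e) \<in> {1..m}" using crange by blast
      have "(\<Sum>j\<in>{1..m}. g j e) = (\<Sum>j\<in>{1..m}. if j = c (oth e) then (if fst e = v \<or> snd e = v then w e else 0) else 0)"
        unfolding g_def by (rule sum.cong) auto
      also have "\<dots> = (if fst e = v \<or> snd e = v then w e else 0)"
        using cr by (simp add: sum.delta)
      finally show "(\<Sum>j\<in>{1..m}. g j e) = (if fst e = v \<or> snd e = v then w e else 0)" .
    qed
    also have "\<dots> = (\<Sum>e\<in>{e\<in>E'. fst e = v \<or> snd e = v}. w e)"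
      by (simp add: sum.inter_filter[OF fE'])
    also have "\<dots> \<le> deg E w v" unfolding deg_def
      by (rule sum_mono2) (use fE wpos E'_def in auto)
    also have "\<dots> < m" using dm vV by auto
    finally have "real m * B (c v) < m" .
    moreover have "real m \<le> real m * B (c v)" using lower m1 by simp
    ultimately show False by simp
  qed
  then show ?thesis using crange by blast
qed


lemma deg_sum:
  fixes V :: "'a set" and E :: "('a \<times> 'a) set" and w :: "'a \<times> 'a \<Rightarrow> real"
  assumes fV: "finite V" and EV: "E \<subseteq> V \<times> V" and wpos: "\<forall>e\<in>E. 0 \<le> w e"
  shows "(\<Sum>v\<in>V. deg E w v) \<le> 2 * (\<Sum>e\<in>E. w e)"
proof -
  have fE: "finite E" using fV EV finite_subset by blast
  have "(\<Sum>v\<in>V. deg E w v) = (\<Sum>v\<in>V. \<Sum>e\<in>E. if fst e = v \<or> snd e = v then w e else 0)"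
    unfolding deg_def by (simp add: sum.inter_filter[OF fE])
  also have "\<dots> = (\<Sum>e\<in>E. \<Sum>v\<in>V. if fst e = v \<or> snd e = v then w e else 0)" by (rule sum.swap)
  also have "\<dots> \<le> (\<Sum>e\<in>E. 2 * w e)"
  proof (rule sum_mono)
    fix e assume eE: "e \<in> E"
    have "(\<Sum>v\<in>V. if fst e = v \<or> snd e = v then w e else 0) = (\<Sum>v\<in>{v\<in>V. fst e = v \<or> snd e = v}. w e)"
      by (rule sum.inter_filter[OF fV, symmetric])
    also have "\<dots> = real (card {v\<in>V. fst e = v \<or> snd e = v}) * w e" by simp
    also have "\<dots> \<le> 2 * w e"
    proof -
      have "{v\<in>V. fst e = v \<or> snd e = v} \<subseteq> {fst e, snd e}" by auto
      then have "card {v\<in>V. fst e = v \<or> snd e = v} \<le> card {fst e, snd e}" by (rule card_mono[rotated]) simp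
      also have "\<dots> \<le> 2" by (simp add: card_insert_le_m1)
      finally have "real (card {v\<in>V. fst e = v \<or> snd e = v}) \<le> 2" by simp
      then show ?thesis using wpos eE by (simp add: mult_right_mono)
    qed
    finally show "(\<Sum>v\<in>V. if fst e = v \<or> snd e = v then w e else 0) \<le> 2 * w e" .
  qed
  also have "\<dots> = 2 * (\<Sum>e\<in>E. w e)" by (simp add: sum_distrib_left)
  finally show ?thesis .
qed

theorem theorem3p5:
  fixes V :: "'a set" and E :: "('a \<times> 'a) set" and w :: "'a \<times> 'a \<Rightarrow> real"
  assumes "weighted_digraph V E w"
  shows "chi_w V E w \<le> 2 * nat \<lfloor>sqrt (2 * (\<Sum>e\<in>E. w e))\<rfloor> + 1"
proof -
  have fV: "finite V" and EV: "E \<subseteq> V \<times> V" and loops: "\<forall>(u,v)\<in>E. u \<noteq> v"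
    and wpos: "\<forall>e\<in>E. 0 \<le> w e" using assms unfolding weighted_digraph_def by auto
  have fE: "finite E" using fV EV finite_subset by blast
  define W where "W = (\<Sum>e\<in>E. w e)"
  have W0: "0 \<le> W" unfolding W_def using wpos by (simp add: sum_nonneg)
  define s where "s = nat \<lfloor>sqrt (2 * W)\<rfloor>"
  define m where "m = s + 1"
  have "real s = of_int \<lfloor>sqrt (2 * W)\<rfloor>" unfolding s_def using W0 by simp
  then have "sqrt (2*W) < real m" unfolding m_def by linarith
  then have "(sqrt (2*W))^2 < (real m)^2" using W0 by (intro power_strict_mono) auto
  then have Wm: "2 * W < real m * real m" using W0 by (simp add: power2_eq_square)
  define H where "H = {v\<in>V. real m \<le> deg E w v}"
  have fH: "finite H" using fV unfolding H_def by simp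
  have dpos: "0 \<le> deg E w v" for v unfolding deg_def using wpos by (auto intro: sum_nonneg)
  have "real (card H) * real m \<le> (\<Sum>v\<in>H. deg E w v)"
    using sum_mono[of H "\<lambda>_. real m" "deg E w"] unfolding H_def by simp
  also have "\<dots> \<le> (\<Sum>v\<in>V. deg E w v)" by (rule sum_mono2[OF fV]) (use dpos H_def in auto)
  also have "\<dots> \<le> 2 * W" unfolding W_def by (rule deg_sum[OF fV EV wpos])
  finally have "real (card H) * real m < real m * real m" using Wm by simp
  then have "real (card H) < real m" using mult_less_cancel_right_pos[of "real m" "real (card H)" "real m"]
    unfolding m_def by (simp add: mult.commute)
  then have "card H < m" by simp
  then have cH: "card H \<le> s" unfolding m_def by simp
  define V' where "V' = V - H"
  have dm: "\<forall>v\<in>V'. deg E w v < m" unfolding V'_def H_def by auto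
  obtain c' where c'r: "\<forall>v\<in>V'. c' v \<in> {1..m}"
    and c'ok: "\<forall>v\<in>V'. in_deg E w (color_class V' c' v) v < 1"
    using potential[of V' E w m] fV loops wpos fE dm unfolding V'_def m_def by auto
  obtain f where f: "bij_betw f H {0..<card H}" using ex_bij_betw_finite_nat[OF fH] by blast
  have finj: "inj_on f H" and frange: "\<And>v. v \<in> H \<Longrightarrow> f v < card H"
    using f by (auto simp: bij_betw_def)
  define c where "c v = (if v \<in> H then f v + 1 else c' v + card H)" for v
  have col: "weighted_improper_coloring V E w (2 * s + 1) c"
    unfolding weighted_improper_coloring_def
  proof (intro conjI ballI)
    fix v assume vV: "v \<in> V"
    show "c v \<in> {1..2 * s + 1}"
    proof (cases "v \<in> H")
      case True then show ?thesis using frange[OF True] cH unfolding c_def by auto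
    next
      case False then have "v \<in> V'" using vV V'_def by auto
      then show ?thesis using c'r False cH unfolding c_def m_def by fastforce
    qed
    show "in_deg E w (color_class V c v) v < 1"
    proof (cases "v \<in> H")
      case True
      have "color_class V c v = {v}"
      proof
        show "color_class V c v \<subseteq> {v}"
        proof
          fix u assume u: "u \<in> color_class V c v"
          then have uV: "u \<in> V" and eq: "c u = c v" unfolding color_class_def by auto
          show "u \<in> {v}"
          proof (cases "u \<in> H")
            case True
            then have "f u = f v" using eq \<open>v \<in> H\<close> unfolding c_def by simp
            then show ?thesis using finj True \<open>v \<in> H\<close> by (auto dest: inj_onD)
          next
            case False
            then have "c' u \<ge> 1" using c'r uV V'_def by auto
            then show ?thesis using False eq frange[OF \<open>v \<in> H\<close>] unfolding c_def
              using \<open>v \<in> H\<close> by auto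
          qed
        qed
      qed (use vV in \<open>auto simp: color_class_def\<close>)
      then have "{u\<in>color_class V c v. (u,v) \<in> E} = {}" using loops by auto
      then show ?thesis unfolding in_deg_def by (simp only: sum.empty)
    next
      case False
      then have vV': "v \<in> V'" using vV V'_def by auto
      have "color_class V c v = color_class V' c' v"
      proof -
        have "c u = c v \<longleftrightarrow> u \<in> V' \<and> c' u = c' v" if "u \<in> V" for u
        proof (cases "u \<in> H")
          case True
          then have "c u \<le> card H" using frange unfolding c_def by (simp add: Suc_leI)
          moreover have "c v > card H" using c'r vV' False unfolding c_def by fastforce
          ultimately show ?thesis using True V'_def by auto
        next
          case False2: False
          then show ?thesis using False that V'_def unfolding c_def by auto
        qed
        then show ?thesis unfolding color_class_def V'_def by auto
      qed
      then show ?thesis using c'ok vV' by simp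
    qed
  qed
  have "chi_w V E w \<le> 2 * s + 1" unfolding chi_w_def by (rule Least_le) (use col in blast)
  then show ?thesis unfolding s_def W_def .
qed

end
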